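(* Fix $k\geqslant 2$. Suppose that for every $k$-player projection game $G'$ that is loosely-connected and satisfies $\mathbf{val}(G')<1$ there is a constant $c_{G'}>0$ with $\mathbf{val}(G'^{\otimes n})\leqslant \exp(-c_{G'} n)$ for all $n\geqslant 1$. Then for every $k$-player projection game $G$ with $\mathbf{val}(G)<1$ there is a constant $c_G>0$ with $\mathbf{val}(G^{\otimes n})\leqslant \exp(-c_G n)$ for all $n\geqslant 1$.
   Context: A $k$-player game $G$ consists of finite question sets $\mathcal{X}_1,\dots,\mathcal{X}_k$, finite answer sets $\mathcal{A}_1,\dots,\mathcal{A}_k$, a probability distribution $\mu$ on $\mathcal{X}_1\times\cdots\times\mathcal{X}_k$, and a predicate $V$ on (question tuple, answer tuple). The verifier samples $(x^1,\dots,x^k)\sim\mu$, sends $x^i$ to player $i$, player $i$ answers $\alpha^i(x^i)\in\mathcal{A}_i$ for some function $\alpha^i$ (no communication), and accepts iff $V$ holds; $\mathbf{val}(G)$ is the maximum acceptance probability over strategies. $G^{\otimes n}$ is the game with question sets $\mathcal{X}_i^n$, answer sets $\mathcal{A}_i^n$, in which $n$ question tuples are drawn independently from $\mu$ (player $i$ receiving the $n$ $i$-th coordinates) and the verifier accepts iff $V$ holds in every coordinate. $G$ is a projection game if for every question tuple $q$ there exist $D_q\geqslant1$ and maps $\sigma^i_q:\mathcal{A}_i\to[D_q]$ with $V(q,(a^1,\dots,a^k))=1$ iff $\sigma^i_q(a^i)=\sigma^{i'}_q(a^{i'})$ for all $i\neq i'$. $G$ is loosely-connected if there do not exist partitions $\mathcal{X}_i=\mathcal{X}'_i\sqcup\mathcal{X}''_i$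 ($i\in[k]$) such that $\mathsf{supp}(\mu)\subseteq(\mathcal{X}'_1\times\cdots\times\mathcal{X}'_k)\cup(\mathcal{X}''_1\times\cdots\times\mathcal{X}''_k)$ and $\mathsf{supp}(\mu)$ intersects both of these products. *)

theory Defs
  imports "HOL-Probability.Probability"
begin

text \<open>A k-player game. Players are indexed by 0..<k. A question tuple is a list
of length k of questions, an answer tuple a list of length k of answers.\<close>

record ('q, 'a) game =
  qset :: "nat \<Rightarrow> 'q set"
  aset :: "nat \<Rightarrow> 'a set"
  qdist :: "'q list pmf"
  verif :: "'q list \<Rightarrow> 'a list \<Rightarrow> bool"

definition qtuples :: "nat \<Rightarrow> ('q, 'a) game \<Rightarrow> 'q list set" where
  "qtuples k G = {q. length q = k \<and> (\<forall>i<k. q ! i \<in> qset G i)}"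

definition atuples :: "nat \<Rightarrow> ('q, 'a) game \<Rightarrow> 'a list set" where
  "atuples k G = {a. length a = k \<and> (\<forall>i<k. a ! i \<in> aset G i)}"

definition is_game :: "nat \<Rightarrow> ('q, 'a) game \<Rightarrow> bool" where
  "is_game k G \<longleftrightarrow>
     (\<forall>i<k. finite (qset G i) \<and> finite (aset G i) \<and> aset G i \<noteq> {}) \<and>
     set_pmf (qdist G) \<subseteq> qtuples k G"

definition strategy :: "nat \<Rightarrow> ('q, 'a) game \<Rightarrow> (nat \<Rightarrow> 'q \<Rightarrow> 'a) \<Rightarrow> bool" where
  "strategy k G \<alpha> \<longleftrightarrow> (\<forall>i<k. \<forall>x\<in>qset G i. \<alpha> i x \<in> aset G i)"

definition win_prob :: "nat \<Rightarrow> ('q, 'a) game \<Rightarrow> (nat \<Rightarrow> 'q \<Rightarrow> 'a) \<Rightarrow> real" where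
  "win_prob k G \<alpha> = measure_pmf.prob (qdist G)
      {q. verif G q (map (\<lambda>i. \<alpha> i (q ! i)) [0..<k])}"

definition val :: "nat \<Rightarrow> ('q, 'a) game \<Rightarrow> real" where
  "val k G = Sup {win_prob k G \<alpha> | \<alpha>. strategy k G \<alpha>}"

definition projection_game :: "nat \<Rightarrow> ('q, 'a) game \<Rightarrow> bool" where
  "projection_game k G \<longleftrightarrow>
     (\<forall>q\<in>qtuples k G. \<exists>(D::nat) (\<sigma>::nat \<Rightarrow> 'a \<Rightarrow> nat). D \<ge> 1 \<and>
        (\<forall>i<k. \<forall>a\<in>aset G i. \<sigma> i a \<in> {1..D}) \<and>
        (\<forall>a\<in>atuples k G. verif G q a \<longleftrightarrow>
            (\<forall>i<k. \<forall>i'<k. i \<noteq> i' \<longrightarrow> \<sigma> i (a ! i) = \<sigma> i' (a ! i'))))"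

definition loosely_connected :: "nat \<Rightarrow> ('q, 'a) game \<Rightarrow> bool" where
  "loosely_connected k G \<longleftrightarrow>
     \<not> (\<exists>P :: nat \<Rightarrow> 'q set.
          (\<forall>i<k. P i \<subseteq> qset G i) \<and>
          (\<forall>q\<in>set_pmf (qdist G). (\<forall>i<k. q ! i \<in> P i) \<or> (\<forall>i<k. q ! i \<in> qset G i - P i)) \<and>
          (\<exists>q\<in>set_pmf (qdist G). \<forall>i<k. q ! i \<in> P i) \<and>
          (\<exists>q\<in>set_pmf (qdist G). \<forall>i<k. q ! i \<in> qset G i - P i))"

text \<open>n-fold parallel repetition. Player i's question/answer is a list of length n.
Question tuple Q (length k) has Q ! i ! j = i-th coordinate of the j-th round.\<close>
definition tensor :: "nat \<Rightarrow> nat \<Rightarrow> ('q, 'a) game \<Rightarrow> ('q list, 'a list) game" where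
  "tensor k n G = \<lparr>
     qset = (\<lambda>i. {xs. length xs = n \<and> set xs \<subseteq> qset G i}),
     aset = (\<lambda>i. {as. length as = n \<and> set as \<subseteq> aset G i}),
     qdist = map_pmf (\<lambda>qs. map (\<lambda>i. map (\<lambda>q. q ! i) qs) [0..<k]) (replicate_pmf n (qdist G)),
     verif = (\<lambda>Q A. \<forall>j<n. verif G (map (\<lambda>i. Q ! i ! j) [0..<k]) (map (\<lambda>i. A ! i ! j) [0..<k])) \<rparr>"

end

theory Submission
  imports Defs
begin

fun merge :: "bool list \<Rightarrow> 'x list \<Rightarrow> 'x list \<Rightarrow> 'x list" where
  "merge [] xs ys = []"
| "merge (b#bs) xs ys = (if b then hd xs # merge bs (tl xs) ys else hd ys # merge bs xs (tl ys))"

definition selT :: "bool list \<Rightarrow> 'x list \<Rightarrow> 'x list" where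
  "selT bs zs = map snd (filter fst (zip bs zs))"
definition selF :: "bool list \<Rightarrow> 'x list \<Rightarrow> 'x list" where
  "selF bs zs = map snd (filter (\<lambda>p. \<not> fst p) (zip bs zs))"
definition cntT :: "bool list \<Rightarrow> nat" where "cntT bs = length (filter id bs)"
definition cntF :: "bool list \<Rightarrow> nat" where "cntF bs = length (filter Not bs)"

lemma cnt_simps[simp]: "cntT [] = 0" "cntF [] = 0"
  "cntT (True#bs) = Suc (cntT bs)" "cntF (True#bs) = cntF bs"
  "cntT (False#bs) = cntT bs" "cntF (False#bs) = Suc (cntF bs)"
  by (auto simp: cntT_def cntF_def)

lemma cnt_sum: "cntT bs + cntF bs = length bs"
  by (induct bs) (auto simp: cntT_def cntF_def)

lemma length_merge[simp]: "length (merge bs xs ys) = length bs"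
  by (induct bs arbitrary: xs ys) auto

lemma merge_sel: "length zs = length bs \<Longrightarrow> merge bs (selT bs zs) (selF bs zs) = zs"
  by (induct bs arbitrary: zs) (auto simp: selT_def selF_def length_Suc_conv)

lemma length_selT: "length zs = length bs \<Longrightarrow> length (selT bs zs) = cntT bs"
  by (induct bs arbitrary: zs) (auto simp: selT_def cntT_def length_Suc_conv)

lemma length_selF: "length zs = length bs \<Longrightarrow> length (selF bs zs) = cntF bs"
  by (induct bs arbitrary: zs) (auto simp: selF_def cntF_def length_Suc_conv)

lemma set_selT: "set (selT bs zs) \<subseteq> set zs"
  by (auto simp: selT_def dest: set_zip_rightD)

lemma map_merge: "length xs = cntT bs \<Longrightarrow> length ys = cntF bs \<Longrightarrow>
   map f (merge bs xs ys) = merge bs (map f xs) (map f ys)"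
  by (induct bs arbitrary: xs ys) (auto simp: length_Suc_conv)

lemma set_merge: "length xs = cntT bs \<Longrightarrow> length ys = cntF bs \<Longrightarrow>
   set (merge bs xs ys) \<subseteq> set xs \<union> set ys"
proof (induct bs arbitrary: xs ys)
  case (Cons a bs)
  then show ?case by (cases a) (fastforce simp: length_Suc_conv)+
qed simp

lemma list_all2_merge: "length xs = cntT bs \<Longrightarrow> length ys = cntF bs \<Longrightarrow>
   length zs = cntT bs \<Longrightarrow> length ws = cntF bs \<Longrightarrow>
   list_all2 R (merge bs xs ys) (merge bs zs ws) \<Longrightarrow> list_all2 R xs zs"
proof (induct bs arbitrary: xs ys zs ws)
  case (Cons a bs)
  then show ?case by (cases a) (auto simp: length_Suc_conv)
qed simp

definition rows :: "nat \<Rightarrow> (nat \<Rightarrow> 'a list) \<Rightarrow> nat \<Rightarrow> 'a list list" where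
  "rows k a n = map (\<lambda>j. map (\<lambda>i. a i ! j) [0..<k]) [0..<n]"

lemma rows_0[simp]: "rows k a 0 = []" by (simp add: rows_def)

lemma rows_Suc: "(\<forall>i<k. a i \<noteq> []) \<Longrightarrow>
   rows k a (Suc n) = map (\<lambda>i. hd (a i)) [0..<k] # rows k (\<lambda>i. tl (a i)) n"
proof -
  assume h: "\<forall>i<k. a i \<noteq> []"
  have e: "a i ! Suc j = tl (a i) ! j" if "i < k" for i j
    using h that by (cases "a i") auto
  have e0: "a i ! 0 = hd (a i)" if "i < k" for i
    using h that by (cases "a i") auto
  show ?thesis unfolding rows_def upt_conv_Cons[OF zero_less_Suc] map_Suc_upt[symmetric]
    by (auto simp: e e0)
qed

lemma rows_cong: "(\<forall>i<k. a i = b i) \<Longrightarrow> rows k a n = rows k b n"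
  by (auto simp: rows_def)

lemma rows_merge: "(\<forall>i<k. length (b i) = cntT bs \<and> length (c i) = cntF bs) \<Longrightarrow>
  rows k (\<lambda>i. merge bs (b i) (c i)) (length bs) = merge bs (rows k b (cntT bs)) (rows k c (cntF bs))"
proof (induct bs arbitrary: b c)
  case Nil
  then show ?case by simp
next
  case (Cons x bs)
  show ?case
  proof (cases x)
    case True
    have ne: "\<forall>i<k. b i \<noteq> []" using Cons.prems True by auto
    have "rows k (\<lambda>i. merge (x#bs) (b i) (c i)) (length (x#bs))
       = rows k (\<lambda>i. hd (b i) # merge bs (tl (b i)) (c i)) (Suc (length bs))"
      using True by simp
    also have "\<dots> = map (\<lambda>i. hd (b i)) [0..<k] # rows k (\<lambda>i. merge bs (tl (b i)) (c i)) (length bs)"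
      by (subst rows_Suc) auto
    also have "\<dots> = map (\<lambda>i. hd (b i)) [0..<k] # merge bs (rows k (\<lambda>i. tl (b i)) (cntT bs)) (rows k c (cntF bs))"
      using Cons.prems True by (subst Cons.hyps) auto
    also have "\<dots> = merge (x#bs) (rows k b (cntT (x#bs))) (rows k c (cntF (x#bs)))"
      using True ne by (simp add: rows_Suc)
    finally show ?thesis .
  next
    case False
    have ne: "\<forall>i<k. c i \<noteq> []" using Cons.prems False by auto
    have "rows k (\<lambda>i. merge (x#bs) (b i) (c i)) (length (x#bs))
       = rows k (\<lambda>i. hd (c i) # merge bs (b i) (tl (c i))) (Suc (length bs))"
      using False by simp
    also have "\<dots> = map (\<lambda>i. hd (c i)) [0..<k] # rows k (\<lambda>i. merge bs (b i) (tl (c i))) (length bs)"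
      by (subst rows_Suc) auto
    also have "\<dots> = map (\<lambda>i. hd (c i)) [0..<k] # merge bs (rows k b (cntT bs)) (rows k (\<lambda>i. tl (c i)) (cntF bs))"
      using Cons.prems False by (subst Cons.hyps) auto
    also have "\<dots> = merge (x#bs) (rows k b (cntT (x#bs))) (rows k c (cntF (x#bs)))"
      using False ne by (simp add: rows_Suc)
    finally show ?thesis .
  qed
qed

lemma mixture:
  fixes \<mu> :: "'x pmf"
  assumes p0: "0 < measure \<mu> A" and p1: "measure \<mu> A < 1"
  shows "\<mu> = bind_pmf (bernoulli_pmf (measure \<mu> A)) (\<lambda>b. if b then cond_pmf \<mu> A else cond_pmf \<mu> (-A))"
proof -
  have ne1: "set_pmf \<mu> \<inter> A \<noteq> {}"
    using p0 measure_Int_set_pmf[of \<mu> A] by (auto simp: Int_commute)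
  have c: "measure \<mu> (-A) = 1 - measure \<mu> A"
    using measure_pmf.prob_compl[of A \<mu>] by (simp add: Compl_eq_Diff_UNIV)
  have ne2: "set_pmf \<mu> \<inter> -A \<noteq> {}"
    using c p1 measure_Int_set_pmf[of \<mu> "-A"] by (auto simp: Int_commute)
  show ?thesis
  proof (rule pmf_eqI)
    fix x
    show "pmf \<mu> x = pmf (bind_pmf (bernoulli_pmf (measure \<mu> A)) (\<lambda>b. if b then cond_pmf \<mu> A else cond_pmf \<mu> (-A))) x"
      using p0 p1 ne1 ne2 c by (simp add: pmf_bind pmf_cond)
  qed
qed

fun Dr0 :: "(bool \<Rightarrow> 'x pmf) \<Rightarrow> bool list \<Rightarrow> 'x list pmf" where
  "Dr0 \<nu> [] = return_pmf []"
| "Dr0 \<nu> (b#bs) = bind_pmf (\<nu> b) (\<lambda>x. map_pmf (Cons x) (Dr0 \<nu> bs))"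

lemma rep_mixture:
  "replicate_pmf n (bind_pmf B \<nu>) = bind_pmf (replicate_pmf n B) (Dr0 \<nu>)"
proof (induct n)
  case 0
  then show ?case by (simp add: bind_return_pmf)
next
  case (Suc n)
  show ?case
    apply (simp add: Suc bind_assoc_pmf bind_return_pmf map_pmf_def[symmetric] map_bind_pmf bind_map_pmf)
    apply (rule bind_pmf_cong, simp)
    apply (subst bind_commute_pmf)
    apply simp
    done
qed

lemma Dr0_split:
  "Dr0 (\<lambda>b. if b then \<mu>1 else \<mu>2) bs =
    bind_pmf (replicate_pmf (cntF bs) \<mu>2) (\<lambda>ys. map_pmf (\<lambda>xs. merge bs xs ys) (replicate_pmf (cntT bs) \<mu>1))"
proof (induct bs)
  case Nil
  then show ?case by (simp add: bind_return_pmf)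
next
  case (Cons b bs)
  show ?case
  proof (cases b)
    case True
    then show ?thesis
      apply (simp add: Cons bind_assoc_pmf bind_return_pmf map_pmf_def[symmetric] map_bind_pmf bind_map_pmf map_pmf_comp)
      apply (subst bind_commute_pmf)
      apply (simp add: map_pmf_def bind_assoc_pmf bind_return_pmf)
      done
  next
    case False
    then show ?thesis
      by (simp add: Cons bind_assoc_pmf bind_return_pmf map_pmf_def[symmetric] map_bind_pmf bind_map_pmf map_pmf_comp)
  qed
qed

lemma measure_bind_le:
  fixes f :: "'x \<Rightarrow> 'y pmf"
  assumes "\<And>x. x \<in> set_pmf M \<Longrightarrow> measure (f x) X \<le> g x" "\<And>x. 0 \<le> g x"
  shows "emeasure (measure_pmf (bind_pmf M f)) X \<le> (\<integral>\<^sup>+x. ennreal (g x) \<partial>M)"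
proof -
  have "emeasure (measure_pmf (bind_pmf M f)) X = (\<integral>\<^sup>+x. emeasure (f x) X \<partial>M)" by simp
  also have "\<dots> \<le> (\<integral>\<^sup>+x. ennreal (g x) \<partial>M)"
    apply (rule nn_integral_mono_AE)
    apply (rule AE_pmfI)
    using assms by (simp add: measure_pmf.emeasure_eq_measure)
  finally show ?thesis .
qed

lemma nn_integral_rep_bern:
  assumes "0 \<le> p" "p \<le> 1" "0 \<le> e"
  shows "(\<integral>\<^sup>+bs. ennreal (e ^ cntT bs) \<partial>replicate_pmf n (bernoulli_pmf p)) = ennreal ((p * e + (1 - p)) ^ n)"
proof (induct n)
  case 0
  then show ?case by simp
next
  case (Suc n)
  have "(\<integral>\<^sup>+bs. ennreal (e ^ cntT bs) \<partial>replicate_pmf (Suc n) (bernoulli_pmf p))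
      = (\<integral>\<^sup>+b. \<integral>\<^sup>+bs. ennreal (e ^ cntT (b#bs)) \<partial>replicate_pmf n (bernoulli_pmf p) \<partial>bernoulli_pmf p)"
    by simp
  also have "\<dots> = (\<integral>\<^sup>+b. ennreal (if b then e else 1) * ennreal ((p * e + (1 - p)) ^ n) \<partial>bernoulli_pmf p)"
  proof (rule nn_integral_cong)
    fix b
    have "(\<integral>\<^sup>+bs. ennreal (e ^ cntT (b#bs)) \<partial>replicate_pmf n (bernoulli_pmf p))
        = (\<integral>\<^sup>+bs. ennreal (if b then e else 1) * ennreal (e ^ cntT bs) \<partial>replicate_pmf n (bernoulli_pmf p))"
      using assms by (intro nn_integral_cong) (auto simp: ennreal_mult')
    also have "\<dots> = ennreal (if b then e else 1) * ennreal ((p * e + (1 - p)) ^ n)"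
      by (subst nn_integral_cmult) (auto simp: Suc)
    finally show "(\<integral>\<^sup>+bs. ennreal (e ^ cntT (b#bs)) \<partial>replicate_pmf n (bernoulli_pmf p))
        = ennreal (if b then e else 1) * ennreal ((p * e + (1 - p)) ^ n)" .
  qed
  also have "\<dots> = ennreal (e * (p * e + (1 - p)) ^ n * p) + ennreal ((p * e + (1 - p)) ^ n * (1 - p))"
    using assms by (simp add: ennreal_mult'[symmetric] ennreal_mult''[symmetric])
  also have "\<dots> = ennreal (e * (p * e + (1 - p)) ^ n * p + (p * e + (1 - p)) ^ n * (1 - p))"
    using assms by (subst ennreal_plus) auto
  also have "\<dots> = ennreal ((p * e + (1 - p)) ^ Suc n)"
    by (simp add: algebra_simps)
  finally show ?case .
qed

lemma measure_supp_cong: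
  "(\<And>x. x \<in> set_pmf M \<Longrightarrow> x \<in> A \<longleftrightarrow> x \<in> B) \<Longrightarrow> measure (measure_pmf M) A = measure (measure_pmf M) B"
  by (metis (no_types, lifting) measure_Int_set_pmf Int_iff subsetI subset_antisym)

lemma measure_supp_mono:
  "(\<And>x. x \<in> set_pmf M \<Longrightarrow> x \<in> A \<Longrightarrow> x \<in> B) \<Longrightarrow> measure (measure_pmf M) A \<le> measure (measure_pmf M) B"
  by (metis (no_types, lifting) measure_Int_set_pmf Int_iff subsetI measure_pmf.finite_measure_mono sets_measure_pmf UNIV_I)

lemma val_facts:
  fixes H :: "('q,'a) game"
  assumes ne: "\<forall>i<k. aset H i \<noteq> {}"
  shows val_ge: "strategy k H \<alpha> \<Longrightarrow> win_prob k H \<alpha> \<le> val k H"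
    and val_le: "(\<And>\<alpha>. strategy k H \<alpha> \<Longrightarrow> win_prob k H \<alpha> \<le> b) \<Longrightarrow> val k H \<le> b"
proof -
  let ?S = "{win_prob k H \<alpha> | \<alpha>. strategy k H \<alpha>}"
  have st: "strategy k H (\<lambda>i x. SOME a. a \<in> aset H i)"
    using ne unfolding strategy_def by (auto simp: some_in_eq)
  have nonempty: "?S \<noteq> {}" using st by blast
  have bdd: "bdd_above ?S"
    by (rule bdd_aboveI[of _ 1]) (auto simp: win_prob_def)
  show "strategy k H \<alpha> \<Longrightarrow> win_prob k H \<alpha> \<le> val k H"
    unfolding val_def by (rule cSup_upper[OF _ bdd]) blast
  show "(\<And>\<alpha>. strategy k H \<alpha> \<Longrightarrow> win_prob k H \<alpha> \<le> b) \<Longrightarrow> val k H \<le> b"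
    unfolding val_def by (rule cSup_least[OF nonempty]) blast
qed

lemma aset_tensor_ne: "aset G i \<noteq> {} \<Longrightarrow> aset (tensor k n G) i \<noteq> {}"
proof -
  assume "aset G i \<noteq> {}"
  then obtain a where "a \<in> aset G i" by blast
  then have "replicate n a \<in> aset (tensor k n G) i" by (auto simp: tensor_def set_replicate_conv_if)
  then show ?thesis by blast
qed

lemma transpose_back: "\<forall>q\<in>set qs. length q = k \<Longrightarrow> j < length qs \<Longrightarrow>
  map (\<lambda>i. map (\<lambda>i. map (\<lambda>q. q ! i) qs) [0..<k] ! i ! j) [0..<k] = qs ! j"
  by (auto intro!: nth_equalityI)

lemma ans_back: "map (\<lambda>i. map (\<lambda>i. \<alpha> i (map (\<lambda>i. map (\<lambda>q. q ! i) x) [0..<k] ! i)) [0..<k] ! i ! j) [0..<k]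
   = map (\<lambda>i. \<alpha> i (map (\<lambda>q. q ! i) x) ! j) [0..<k]"
  by (auto intro!: nth_equalityI)

lemma win_prob_tensor:
  fixes H :: "('q,'a) game"
  assumes "set_pmf (qdist H) \<subseteq> {q. length q = k}"
  shows "win_prob k (tensor k n H) \<alpha> = measure (replicate_pmf n (qdist H))
     {qs. list_all2 (verif H) qs (rows k (\<lambda>i. \<alpha> i (map (\<lambda>q. q!i) qs)) n)}"
  unfolding win_prob_def
  apply (simp add: tensor_def)
  apply (rule measure_supp_cong)
  using assms
  apply (auto simp: set_replicate_pmf list_all2_conv_all_nth rows_def transpose_back ans_back subset_iff cong: map_cong)
  done

lemma length_rows[simp]: "length (rows k a n) = n" by (simp add: rows_def)

lemma key_pointwise:
  fixes G :: "('q,'a) game"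
  assumes game: "is_game k G"
    and st: "strategy k (tensor k n G) \<alpha>"
    and bs: "length bs = n"
    and ys: "length ys = cntF bs" "set ys \<subseteq> set_pmf (qdist G)"
    and xs: "length xs = cntT bs" "set xs \<subseteq> set_pmf (qdist G)"
    and W: "list_all2 (verif G) (merge bs xs ys) (rows k (\<lambda>i. \<alpha> i (map (\<lambda>q. q!i) (merge bs xs ys))) n)"
  shows "list_all2 (verif G) xs (rows k (\<lambda>i. selT bs (\<alpha> i (merge bs (map (\<lambda>q. q!i) xs) (map (\<lambda>q. q!i) ys)))) (cntT bs))"
proof -
  have supp: "set_pmf (qdist G) \<subseteq> qtuples k G" using game by (simp add: is_game_def)
  define a where "a i = \<alpha> i (map (\<lambda>q. q!i) (merge bs xs ys))" for i
  have col: "map (\<lambda>q. q!i) (merge bs xs ys) = merge bs (map (\<lambda>q. q!i) xs) (map (\<lambda>q. q!i) ys)" for i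
    using xs ys by (simp add: map_merge)
  have la: "length (a i) = n" if "i < k" for i
  proof -
    have "set (merge bs xs ys) \<subseteq> set xs \<union> set ys" using xs(1) ys(1) by (rule set_merge)
    then have "set (merge bs xs ys) \<subseteq> qtuples k G" using xs ys supp by blast
    then have "set (map (\<lambda>q. q!i) (merge bs xs ys)) \<subseteq> qset G i"
      using that by (auto simp: qtuples_def)
    then have "map (\<lambda>q. q!i) (merge bs xs ys) \<in> qset (tensor k n G) i"
      using bs by (simp add: tensor_def)
    then have "a i \<in> aset (tensor k n G) i" using st that by (auto simp: strategy_def a_def)
    then show ?thesis by (simp add: tensor_def)
  qed
  have ai: "a i = merge bs (selT bs (\<alpha> i (merge bs (map (\<lambda>q. q!i) xs) (map (\<lambda>q. q!i) ys)))) (selF bs (a i))"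
    if "i < k" for i
    using merge_sel[of "a i" bs] la[OF that] bs by (simp add: a_def col)
  have "rows k a n = rows k (\<lambda>i. merge bs (selT bs (\<alpha> i (merge bs (map (\<lambda>q. q!i) xs) (map (\<lambda>q. q!i) ys)))) (selF bs (a i))) (length bs)"
    using bs ai by (auto intro: rows_cong)
  also have "\<dots> = merge bs (rows k (\<lambda>i. selT bs (\<alpha> i (merge bs (map (\<lambda>q. q!i) xs) (map (\<lambda>q. q!i) ys)))) (cntT bs)) (rows k (\<lambda>i. selF bs (a i)) (cntF bs))"
    apply (rule rows_merge)
    using la bs ai by (auto simp: length_selT length_selF a_def col)
  finally have "rows k a n = \<dots>" .
  moreover have "(\<lambda>i. \<alpha> i (map (\<lambda>q. q!i) (merge bs xs ys))) = a" by (simp add: a_def fun_eq_iff)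
  ultimately have "list_all2 (verif G) (merge bs xs ys) (merge bs (rows k (\<lambda>i. selT bs (\<alpha> i (merge bs (map (\<lambda>q. q!i) xs) (map (\<lambda>q. q!i) ys)))) (cntT bs)) (rows k (\<lambda>i. selF bs (a i)) (cntF bs)))"
    using W by simp
  then show ?thesis
    by (rule list_all2_merge[rotated 4]) (use xs ys in auto)
qed

lemma core:
  fixes G :: "('q,'a) game"
  assumes game: "is_game k G" and p0: "0 < measure (qdist G) A" and p1: "measure (qdist G) A < 1"
    and c1: "0 < c1"
    and dec: "\<forall>m\<ge>1. val k (tensor k m (G\<lparr>qdist := cond_pmf (qdist G) A\<rparr>)) \<le> exp (- c1 * real m)"
  shows "\<exists>c>0. \<forall>n\<ge>1. val k (tensor k n G) \<le> exp (- c * real n)"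
proof -
  define \<mu> where "\<mu> = qdist G"
  define p where "p = measure \<mu> A"
  define \<mu>1 where "\<mu>1 = cond_pmf \<mu> A"
  define \<mu>2 where "\<mu>2 = cond_pmf \<mu> (-A)"
  define G1 where "G1 = G\<lparr>qdist := \<mu>1\<rparr>"
  define e where "e = exp (-c1)"
  define r where "r = p * e + (1 - p)"
  have e01: "0 < e" "e < 1" using c1 by (auto simp: e_def)
  have p01: "0 < p" "p < 1" using p0 p1 by (auto simp: p_def \<mu>_def)
  have "0 < p * (1 - e)" using e01 p01 by simp
  moreover have "0 \<le> p * e" using e01 p01 by simp
  ultimately have r01: "0 < r" "r < 1" using p01 by (auto simp: r_def algebra_simps)
  have ne1: "set_pmf \<mu> \<inter> A \<noteq> {}"
    using p01 measure_Int_set_pmf[of \<mu> A] by (auto simp: Int_commute p_def)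
  have cpl: "measure \<mu> (-A) = 1 - measure \<mu> A"
    using measure_pmf.prob_compl[of A \<mu>] by (simp add: Compl_eq_Diff_UNIV)
  have ne2: "set_pmf \<mu> \<inter> -A \<noteq> {}"
    using cpl p01 measure_Int_set_pmf[of \<mu> "-A"] by (auto simp: Int_commute p_def)
  have supp: "set_pmf \<mu> \<subseteq> qtuples k G" using game by (simp add: is_game_def \<mu>_def)
  have supp1: "set_pmf \<mu>1 \<subseteq> set_pmf \<mu>" unfolding \<mu>1_def using set_cond_pmf[OF ne1] by simp
  have supp2: "set_pmf \<mu>2 \<subseteq> set_pmf \<mu>" unfolding \<mu>2_def using set_cond_pmf[OF ne2] by simp
  have ane: "\<forall>i<k. aset G i \<noteq> {}" using game by (simp add: is_game_def)
  have mix: "\<mu> = bind_pmf (bernoulli_pmf p) (\<lambda>b. if b then \<mu>1 else \<mu>2)"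
    unfolding \<mu>1_def \<mu>2_def p_def using p01 unfolding p_def by (rule mixture)
  have rep: "replicate_pmf n \<mu> = bind_pmf (replicate_pmf n (bernoulli_pmf p))
     (\<lambda>bs. bind_pmf (replicate_pmf (cntF bs) \<mu>2) (\<lambda>ys. map_pmf (\<lambda>xs. merge bs xs ys) (replicate_pmf (cntT bs) \<mu>1)))" for n
    by (subst mix, subst rep_mixture, rule arg_cong[where f="bind_pmf _"], rule ext, rule Dr0_split)

  have inner: "measure (map_pmf (\<lambda>xs. merge bs xs ys) (replicate_pmf (cntT bs) \<mu>1))
      {qs. list_all2 (verif G) qs (rows k (\<lambda>i. \<alpha> i (map (\<lambda>q. q!i) qs)) n)} \<le> e ^ cntT bs"
    if st: "strategy k (tensor k n G) \<alpha>" and bs: "length bs = n"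
      and ys: "length ys = cntF bs" "set ys \<subseteq> set_pmf \<mu>" for n \<alpha> bs ys
  proof -
    define \<beta> where "\<beta> i zs = selT bs (\<alpha> i (merge bs zs (map (\<lambda>q. q!i) ys)))" for i zs
    define T where "T = cntT bs"
    have "measure (map_pmf (\<lambda>xs. merge bs xs ys) (replicate_pmf (cntT bs) \<mu>1))
      {qs. list_all2 (verif G) qs (rows k (\<lambda>i. \<alpha> i (map (\<lambda>q. q!i) qs)) n)}
      = measure (replicate_pmf T \<mu>1) {xs. list_all2 (verif G) (merge bs xs ys) (rows k (\<lambda>i. \<alpha> i (map (\<lambda>q. q!i) (merge bs xs ys))) n)}"
      by (simp add: T_def)
    also have "\<dots> \<le> measure (replicate_pmf T \<mu>1) {xs. list_all2 (verif G) xs (rows k (\<lambda>i. \<beta> i (map (\<lambda>q. q!i) xs)) T)}"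
    proof (rule measure_supp_mono)
      fix xs assume xs: "xs \<in> set_pmf (replicate_pmf T \<mu>1)"
        and W: "xs \<in> {xs. list_all2 (verif G) (merge bs xs ys) (rows k (\<lambda>i. \<alpha> i (map (\<lambda>q. q!i) (merge bs xs ys))) n)}"
      have xs': "length xs = cntT bs" "set xs \<subseteq> set_pmf (qdist G)"
        using xs supp1 by (auto simp: set_replicate_pmf T_def \<mu>_def)
      show "xs \<in> {xs. list_all2 (verif G) xs (rows k (\<lambda>i. \<beta> i (map (\<lambda>q. q!i) xs)) T)}"
        using key_pointwise[OF game st bs ys(1) _ xs'] ys(2) W
        by (simp add: \<beta>_def T_def \<mu>_def)
    qed
    also have "\<dots> = win_prob k (tensor k T G1) \<beta>"
      by (subst win_prob_tensor) (use supp supp1 in \<open>auto simp: G1_def qtuples_def\<close>)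
    also have "\<dots> \<le> e ^ T"
    proof (cases "T = 0")
      case True
      then show ?thesis by (simp add: win_prob_def)
    next
      case False
      have stb: "strategy k (tensor k T G1) \<beta>"
        unfolding strategy_def
      proof (intro allI impI ballI)
        fix i x assume i: "i < k" and x: "x \<in> qset (tensor k T G1) i"
        have x': "length x = cntT bs" "set x \<subseteq> qset G i" using x by (auto simp: tensor_def G1_def T_def)
        have "set (merge bs x (map (\<lambda>q. q!i) ys)) \<subseteq> set x \<union> set (map (\<lambda>q. q!i) ys)"
          by (rule set_merge) (use x' ys in auto)
        moreover have "set (map (\<lambda>q. q!i) ys) \<subseteq> qset G i"
          using ys(2) supp i by (auto simp: qtuples_def)
        ultimately have "merge bs x (map (\<lambda>q. q!i) ys) \<in> qset (tensor k n G) i"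
          using x' bs by (auto simp: tensor_def)
        then have "\<alpha> i (merge bs x (map (\<lambda>q. q!i) ys)) \<in> aset (tensor k n G) i"
          using st i by (auto simp: strategy_def)
        then show "\<beta> i x \<in> aset (tensor k T G1) i"
          using bs set_selT[of bs "\<alpha> i (merge bs x (map (\<lambda>q. q!i) ys))"]
          by (auto simp: tensor_def G1_def \<beta>_def T_def length_selT)
      qed
      have "win_prob k (tensor k T G1) \<beta> \<le> val k (tensor k T G1)"
      proof (rule val_ge[OF _ stb])
        show "\<forall>i<k. aset (tensor k T G1) i \<noteq> {}"
          using ane by (simp add: aset_tensor_ne G1_def)
      qed
      also have "\<dots> \<le> exp (- c1 * real T)"
        using dec False by (auto simp: G1_def \<mu>1_def \<mu>_def)
      also have "\<dots> = e ^ T"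
        by (simp add: e_def exp_of_nat_mult[symmetric] mult.commute)
      finally show ?thesis .
    qed
    finally show ?thesis by (simp add: T_def)
  qed
  have main: "win_prob k (tensor k n G) \<alpha> \<le> r ^ n" if st: "strategy k (tensor k n G) \<alpha>" for n \<alpha>
  proof -
    let ?W = "{qs. list_all2 (verif G) qs (rows k (\<lambda>i. \<alpha> i (map (\<lambda>q. q!i) qs)) n)}"
    have "win_prob k (tensor k n G) \<alpha> = measure (replicate_pmf n \<mu>) ?W"
      using win_prob_tensor[of G k n \<alpha>] supp by (auto simp: qtuples_def \<mu>_def)
    moreover have "emeasure (measure_pmf (replicate_pmf n \<mu>)) ?W \<le> ennreal (r ^ n)"
    proof -
      have "emeasure (measure_pmf (replicate_pmf n \<mu>)) ?W \<le>
         (\<integral>\<^sup>+bs. ennreal (e ^ cntT bs) \<partial>replicate_pmf n (bernoulli_pmf p))"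
        unfolding rep
      proof (rule measure_bind_le)
        fix bs assume bs: "bs \<in> set_pmf (replicate_pmf n (bernoulli_pmf p))"
        then have lbs: "length bs = n" by (simp add: set_replicate_pmf)
        have "emeasure (measure_pmf (bind_pmf (replicate_pmf (cntF bs) \<mu>2) (\<lambda>ys. map_pmf (\<lambda>xs. merge bs xs ys) (replicate_pmf (cntT bs) \<mu>1)))) ?W
            \<le> (\<integral>\<^sup>+ys. ennreal (e ^ cntT bs) \<partial>replicate_pmf (cntF bs) \<mu>2)"
        proof (rule measure_bind_le)
          fix ys assume "ys \<in> set_pmf (replicate_pmf (cntF bs) \<mu>2)"
          then have "length ys = cntF bs" "set ys \<subseteq> set_pmf \<mu>"
            using supp2 by (auto simp: set_replicate_pmf)
          then show "measure (map_pmf (\<lambda>xs. merge bs xs ys) (replicate_pmf (cntT bs) \<mu>1)) ?W \<le> e ^ cntT bs"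
            using inner[OF st lbs] by blast
        qed (use e01 in simp)
        also have "\<dots> = ennreal (e ^ cntT bs)"
          by (simp add: measure_pmf.emeasure_space_1)
        finally show "measure (bind_pmf (replicate_pmf (cntF bs) \<mu>2) (\<lambda>ys. map_pmf (\<lambda>xs. merge bs xs ys) (replicate_pmf (cntT bs) \<mu>1))) ?W \<le> e ^ cntT bs"
          using e01 by (simp add: measure_pmf.emeasure_eq_measure)
      qed (use e01 in simp)
      also have "\<dots> = ennreal (r ^ n)"
        unfolding r_def using p01 e01 by (intro nn_integral_rep_bern) auto
      finally show ?thesis .
    qed
    then have "measure (replicate_pmf n \<mu>) ?W \<le> r ^ n"
      using r01 by (simp add: measure_pmf.emeasure_eq_measure)
    ultimately show ?thesis by simp
  qed
  have vb: "val k (tensor k n G) \<le> r ^ n" for n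
  proof (rule val_le)
    show "\<forall>i<k. aset (tensor k n G) i \<noteq> {}" using ane by (simp add: aset_tensor_ne)
  qed (use main in auto)
  show ?thesis
  proof (intro exI conjI allI impI)
    show "0 < - ln r" using r01 by simp
    fix n :: nat
    have "exp (- (- ln r) * real n) = r ^ n"
    proof -
      have "exp (- (- ln r) * real n) = exp (of_nat n * ln r)" by (simp add: mult.commute)
      also have "\<dots> = exp (ln r) ^ n" by (rule exp_of_nat_mult)
      also have "\<dots> = r ^ n" using r01 by simp
      finally show ?thesis .
    qed
    then show "val k (tensor k n G) \<le> exp (- (- ln r) * real n)" using vb by simp
  qed
qed

lemma mixture_measure:
  fixes \<mu> :: "'x pmf"
  assumes p0: "0 < measure \<mu> A" and p1: "measure \<mu> A < 1"
  shows "measure \<mu> X = measure \<mu> A * measure (cond_pmf \<mu> A) X + (1 - measure \<mu> A) * measure (cond_pmf \<mu> (-A)) X"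
proof -
  define p where "p = measure \<mu> A"
  have mix: "\<mu> = bind_pmf (bernoulli_pmf p) (\<lambda>b. if b then cond_pmf \<mu> A else cond_pmf \<mu> (-A))"
    unfolding p_def using p0 p1 by (rule mixture)
  have "ennreal (measure \<mu> X) = emeasure (measure_pmf \<mu>) X"
    by (simp add: measure_pmf.emeasure_eq_measure)
  also have "\<dots> = emeasure (measure_pmf (bind_pmf (bernoulli_pmf p) (\<lambda>b. if b then cond_pmf \<mu> A else cond_pmf \<mu> (-A)))) X"
    using mix by (rule arg_cong)
  also have "\<dots> = ennreal (measure (cond_pmf \<mu> A) X) * ennreal p + ennreal (measure (cond_pmf \<mu> (-A)) X) * ennreal (1 - p)"
    unfolding emeasure_bind_pmf
    using p0 p1 by (simp add: measure_pmf.emeasure_eq_measure p_def)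
  also have "\<dots> = ennreal (measure (cond_pmf \<mu> A) X * p) + ennreal (measure (cond_pmf \<mu> (-A)) X * (1 - p))"
    using p0 p1 by (simp add: ennreal_mult'' p_def)
  also have "\<dots> = ennreal (measure (cond_pmf \<mu> A) X * p + measure (cond_pmf \<mu> (-A)) X * (1 - p))"
    using p0 p1 by (intro ennreal_plus[symmetric]) (auto simp: p_def)
  finally have "measure \<mu> X = measure (cond_pmf \<mu> A) X * p + measure (cond_pmf \<mu> (-A)) X * (1 - p)"
    using p0 p1 by (subst (asm) ennreal_inj) (auto simp: p_def)
  then show ?thesis by (simp add: p_def mult.commute)
qed

lemma claim1:
  fixes G :: "('q,'a) game"
  assumes ane: "\<forall>i<k. aset G i \<noteq> {}"
    and p0: "0 < measure (qdist G) A" and p1: "measure (qdist G) A < 1"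
    and A: "A = {q. \<forall>i<k. q!i \<in> P i}"
    and spl: "\<forall>q\<in>set_pmf (qdist G). q \<in> A \<or> (\<forall>i<k. q!i \<notin> P i)"
    and v1: "1 \<le> val k (G\<lparr>qdist := cond_pmf (qdist G) A\<rparr>)"
    and v2: "1 \<le> val k (G\<lparr>qdist := cond_pmf (qdist G) (-A)\<rparr>)"
  shows "1 \<le> val k G"
proof -
  define \<mu> where "\<mu> = qdist G"
  define p where "p = measure \<mu> A"
  define G1 where "G1 = G\<lparr>qdist := cond_pmf \<mu> A\<rparr>"
  define G2 where "G2 = G\<lparr>qdist := cond_pmf \<mu> (-A)\<rparr>"
  have ne1: "set_pmf \<mu> \<inter> A \<noteq> {}"
    using p0 measure_Int_set_pmf[of \<mu> A] by (auto simp: Int_commute \<mu>_def)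
  have cpl: "measure \<mu> (-A) = 1 - measure \<mu> A"
    using measure_pmf.prob_compl[of A \<mu>] by (simp add: Compl_eq_Diff_UNIV)
  have ne2: "set_pmf \<mu> \<inter> -A \<noteq> {}"
    using cpl p1 measure_Int_set_pmf[of \<mu> "-A"] by (auto simp: Int_commute \<mu>_def)
  have st_eq: "strategy k G1 = strategy k G" "strategy k G2 = strategy k G"
    by (auto simp: G1_def G2_def strategy_def fun_eq_iff)
  have ane1: "\<forall>i<k. aset G1 i \<noteq> {}" "\<forall>i<k. aset G2 i \<noteq> {}" using ane by (auto simp: G1_def G2_def)
  have key: "p * win_prob k G1 \<alpha>1 + (1 - p) * win_prob k G2 \<alpha>2 \<le> val k G"
    if s1: "strategy k G \<alpha>1" and s2: "strategy k G \<alpha>2" for \<alpha>1 \<alpha>2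
  proof -
    define \<alpha> where "\<alpha> i x = (if x \<in> P i then \<alpha>1 i x else \<alpha>2 i x)" for i x
    have st: "strategy k G \<alpha>" using s1 s2 by (auto simp: strategy_def \<alpha>_def)
    have "win_prob k G \<alpha> = p * measure (cond_pmf \<mu> A) {q. verif G q (map (\<lambda>i. \<alpha> i (q ! i)) [0..<k])}
       + (1 - p) * measure (cond_pmf \<mu> (-A)) {q. verif G q (map (\<lambda>i. \<alpha> i (q ! i)) [0..<k])}"
      unfolding win_prob_def p_def \<mu>_def using p0 p1 by (rule mixture_measure)
    also have "measure (cond_pmf \<mu> A) {q. verif G q (map (\<lambda>i. \<alpha> i (q ! i)) [0..<k])} = win_prob k G1 \<alpha>1"
      unfolding win_prob_def G1_def
    proof (simp, rule measure_supp_cong)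
      fix q assume "q \<in> set_pmf (cond_pmf \<mu> A)"
      then have "q \<in> A" using set_cond_pmf[OF ne1] by auto
      then have "map (\<lambda>i. \<alpha> i (q ! i)) [0..<k] = map (\<lambda>i. \<alpha>1 i (q ! i)) [0..<k]"
        by (auto simp: A \<alpha>_def)
      then show "q \<in> {q. verif G q (map (\<lambda>i. \<alpha> i (q ! i)) [0..<k])} \<longleftrightarrow> q \<in> {q. verif G q (map (\<lambda>i. \<alpha>1 i (q ! i)) [0..<k])}"
        by (simp only: mem_Collect_eq)
    qed
    also have "measure (cond_pmf \<mu> (-A)) {q. verif G q (map (\<lambda>i. \<alpha> i (q ! i)) [0..<k])} = win_prob k G2 \<alpha>2"
      unfolding win_prob_def G2_def
    proof (simp, rule measure_supp_cong)
      fix q assume "q \<in> set_pmf (cond_pmf \<mu> (-A))"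
      then have "q \<in> set_pmf \<mu>" "q \<notin> A" using set_cond_pmf[OF ne2] by auto
      then have "\<forall>i<k. q!i \<notin> P i" using spl by (auto simp: \<mu>_def)
      then have "map (\<lambda>i. \<alpha> i (q ! i)) [0..<k] = map (\<lambda>i. \<alpha>2 i (q ! i)) [0..<k]"
        by (auto simp: \<alpha>_def)
      then show "q \<in> {q. verif G q (map (\<lambda>i. \<alpha> i (q ! i)) [0..<k])} \<longleftrightarrow> q \<in> {q. verif G q (map (\<lambda>i. \<alpha>2 i (q ! i)) [0..<k])}"
        by (simp only: mem_Collect_eq)
    qed
    finally have "win_prob k G \<alpha> = p * win_prob k G1 \<alpha>1 + (1 - p) * win_prob k G2 \<alpha>2" .
    with val_ge[OF ane st] show ?thesis by simp
  qed
  have pp: "0 < p" "p < 1" using p0 p1 by (auto simp: p_def \<mu>_def)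
  have b1: "val k G1 \<le> (val k G - (1 - p) * win_prob k G2 \<alpha>2) / p" if s2: "strategy k G \<alpha>2" for \<alpha>2
  proof (rule val_le[OF ane1(1)])
    fix \<alpha>1 assume "strategy k G1 \<alpha>1"
    then have "p * win_prob k G1 \<alpha>1 + (1 - p) * win_prob k G2 \<alpha>2 \<le> val k G"
      using key s2 st_eq by simp
    then show "win_prob k G1 \<alpha>1 \<le> (val k G - (1 - p) * win_prob k G2 \<alpha>2) / p"
      using pp by (simp add: field_simps)
  qed
  have v1': "1 \<le> val k G1" using v1 by (simp add: G1_def \<mu>_def)
  have v2': "1 \<le> val k G2" using v2 by (simp add: G2_def \<mu>_def)
  have "val k G2 \<le> (val k G - p) / (1 - p)"
  proof (rule val_le[OF ane1(2)])
    fix \<alpha>2 assume "strategy k G2 \<alpha>2"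
    then have "strategy k G \<alpha>2" using st_eq by simp
    then have "val k G1 \<le> (val k G - (1 - p) * win_prob k G2 \<alpha>2) / p" by (rule b1)
    then have "1 \<le> (val k G - (1 - p) * win_prob k G2 \<alpha>2) / p" using v1' by linarith
    then show "win_prob k G2 \<alpha>2 \<le> (val k G - p) / (1 - p)"
      using pp by (simp add: field_simps)
  qed
  with v2' have "1 \<le> (val k G - p) / (1 - p)" by simp
  then show ?thesis using pp by (simp add: field_simps)
qed

lemma finite_qtuples: "is_game k G \<Longrightarrow> finite (qtuples k G)"
proof -
  assume g: "is_game k G"
  have "qtuples k G \<subseteq> {xs. set xs \<subseteq> (\<Union>i<k. qset G i) \<and> length xs = k}"
    by (auto simp: qtuples_def in_set_conv_nth lessThan_iff intro!: bexI)
  moreover have "finite {xs. set xs \<subseteq> (\<Union>i<k. qset G i) \<and> length xs = k}"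
    using g by (intro finite_lists_length_eq) (auto simp: is_game_def)
  ultimately show ?thesis by (rule finite_subset)
qed

theorem lemma2p4:
  fixes k :: nat and G :: "('q, 'a) game"
  assumes k2: "k \<ge> 2"
    and hyp: "\<forall>G' :: ('q, 'a) game.
        is_game k G' \<and> projection_game k G' \<and> loosely_connected k G' \<and> val k G' < 1 \<longrightarrow>
        (\<exists>c>0. \<forall>n\<ge>1. val k (tensor k n G') \<le> exp (- c * real n))"
    and G: "is_game k G" "projection_game k G" "val k G < 1"
  shows "\<exists>c>0. \<forall>n\<ge>1. val k (tensor k n G) \<le> exp (- c * real n)"
proof -
  have k0: "0 < k" using k2 by simp
  have gen: "\<forall>H :: ('q,'a) game. card (set_pmf (qdist H)) = N \<longrightarrow>
     is_game k H \<and> projection_game k H \<and> val k H < 1 \<longrightarrow>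
     (\<exists>c>0. \<forall>n\<ge>1. val k (tensor k n H) \<le> exp (- c * real n))" for N
  proof (induction N rule: less_induct)
    case (less N)
    show ?case
    proof (intro allI impI)
      fix H :: "('q,'a) game"
      assume cardH: "card (set_pmf (qdist H)) = N"
        and HH: "is_game k H \<and> projection_game k H \<and> val k H < 1"
      show "\<exists>c>0. \<forall>n\<ge>1. val k (tensor k n H) \<le> exp (- c * real n)"
      proof (cases "loosely_connected k H")
        case True
        then show ?thesis using hyp HH by blast
      next
        case False
        then obtain P where
          P2: "\<forall>q\<in>set_pmf (qdist H). (\<forall>i<k. q!i \<in> P i) \<or> (\<forall>i<k. q!i \<in> qset H i - P i)"
          and P3: "\<exists>q\<in>set_pmf (qdist H). \<forall>i<k. q!i \<in> P i"
          and P4: "\<exists>q\<in>set_pmf (qdist H). \<forall>i<k. q!i \<in> qset H i - P i"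
          unfolding loosely_connected_def by blast
        define \<mu> where "\<mu> = qdist H"
        define A where "A = {q. \<forall>i<k. q!i \<in> P i}"
        obtain q1 where q1: "q1 \<in> set_pmf \<mu>" "q1 \<in> A" using P3 by (auto simp: A_def \<mu>_def)
        obtain q2 where q2: "q2 \<in> set_pmf \<mu>" "\<forall>i<k. q2!i \<notin> P i" using P4 by (auto simp: \<mu>_def)
        have q2A: "q2 \<in> -A" using q2(2) k0 by (auto simp: A_def)
        have spl: "\<forall>q\<in>set_pmf (qdist H). q \<in> A \<or> (\<forall>i<k. q!i \<notin> P i)"
          using P2 by (auto simp: A_def)
        have pA: "0 < measure \<mu> A" by (rule measure_pmf_posI[OF q1])
        have pnA: "0 < measure \<mu> (-A)" by (rule measure_pmf_posI[OF q2(1) q2A])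
        have cpl: "measure \<mu> (-A) = 1 - measure \<mu> A"
          using measure_pmf.prob_compl[of A \<mu>] by (simp add: Compl_eq_Diff_UNIV)
        have pA1: "measure \<mu> A < 1" using pnA cpl by simp
        have pnA1: "measure \<mu> (-A) < 1" using pA cpl by simp
        have ne1: "set_pmf \<mu> \<inter> A \<noteq> {}" using q1 by blast
        have ne2: "set_pmf \<mu> \<inter> -A \<noteq> {}" using q2(1) q2A by blast
        have supp: "set_pmf \<mu> \<subseteq> qtuples k H" using HH by (simp add: is_game_def \<mu>_def)
        have fin: "finite (set_pmf \<mu>)"
          using finite_subset[OF supp finite_qtuples] HH by blast
        define H1 where "H1 = H\<lparr>qdist := cond_pmf \<mu> A\<rparr>"
        define H2 where "H2 = H\<lparr>qdist := cond_pmf \<mu> (-A)\<rparr>"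
        have s1: "set_pmf (qdist H1) = set_pmf \<mu> \<inter> A" using set_cond_pmf[OF ne1] by (simp add: H1_def)
        have s2: "set_pmf (qdist H2) = set_pmf \<mu> \<inter> -A" using set_cond_pmf[OF ne2] by (simp add: H2_def)
        have card1: "card (set_pmf (qdist H1)) < N"
          unfolding cardH[symmetric] s1 \<mu>_def[symmetric]
          by (rule psubset_card_mono[OF fin]) (use q2 q2A in blast)
        have card2: "card (set_pmf (qdist H2)) < N"
          unfolding cardH[symmetric] s2 \<mu>_def[symmetric]
          by (rule psubset_card_mono[OF fin]) (use q1 in blast)
        have qt1: "qtuples k H1 = qtuples k H" by (simp add: qtuples_def H1_def)
        have qt2: "qtuples k H2 = qtuples k H" by (simp add: qtuples_def H2_def)
        have g1: "is_game k H1" using HH supp s1 qt1 by (auto simp: is_game_def H1_def)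
        have g2: "is_game k H2" using HH supp s2 qt2 by (auto simp: is_game_def H2_def)
        have pr1: "projection_game k H1" using HH
          by (simp add: projection_game_def qtuples_def atuples_def H1_def)
        have pr2: "projection_game k H2" using HH
          by (simp add: projection_game_def qtuples_def atuples_def H2_def)
        have ane: "\<forall>i<k. aset H i \<noteq> {}" using HH by (simp add: is_game_def)
        have "val k H1 < 1 \<or> val k H2 < 1"
        proof (rule ccontr)
          assume "\<not> (val k H1 < 1 \<or> val k H2 < 1)"
          then have v: "1 \<le> val k (H\<lparr>qdist := cond_pmf (qdist H) A\<rparr>)"
                    "1 \<le> val k (H\<lparr>qdist := cond_pmf (qdist H) (-A)\<rparr>)"
            by (auto simp: H1_def H2_def \<mu>_def)
          have "1 \<le> val k H"
            by (rule claim1[OF ane _ _ A_def spl v]) (use pA pA1 in \<open>auto simp: \<mu>_def\<close>)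
          then show False using HH by simp
        qed
        then show ?thesis
        proof
          assume "val k H1 < 1"
          then obtain c1 where c1: "c1 > 0" "\<forall>n\<ge>1. val k (tensor k n H1) \<le> exp (- c1 * real n)"
            using less.IH[OF card1] g1 pr1 by blast
          show ?thesis
            by (rule core[OF _ _ _ c1(1)]) (use HH pA pA1 c1(2) in \<open>auto simp: H1_def \<mu>_def\<close>)
        next
          assume "val k H2 < 1"
          then obtain c1 where c1: "c1 > 0" "\<forall>n\<ge>1. val k (tensor k n H2) \<le> exp (- c1 * real n)"
            using less.IH[OF card2] g2 pr2 by blast
          show ?thesis
            by (rule core[OF _ _ _ c1(1)]) (use HH pnA pnA1 c1(2) in \<open>auto simp: H2_def \<mu>_def\<close>)
        qed
      qed
    qed
  qed
  then show ?thesis using G by blast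
qed

end
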